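(* Let $p\ge2$ be a fixed integer and let $\lambda,\mu$ be integral partitions all of whose entries are powers $p^i$ ($i\ge0$) of $p$. Then $\lambda\hookrightarrow\mu$ if and only if $\lambda\preccurlyeq_S\mu$.
   Context: An integral partition is a finite nonincreasing sequence of positive integers. $\lambda=[\lambda_1,\ldots,\lambda_m]$ embeds into $\mu=[\mu_1,\ldots,\mu_n]$, written $\lambda\hookrightarrow\mu$, if there is a map $\varphi:\{1,\ldots,m\}\to\{1,\ldots,n\}$ with $\sum_{i\in\varphi^{-1}(j)}\lambda_i\le\mu_j$ for all $j$. $\lambda\preccurlyeq_S\mu$ ($\mu$ supermajorizes $\lambda$) means: for every $x\in\mathbb N$, $\sum_{\lambda_i\ge x}\lambda_i\le\sum_{\mu_j\ge x}\mu_j$. *)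

theory Defs
  imports Main
begin

definition integral_partition :: "nat list \<Rightarrow> bool" where
  "integral_partition xs \<longleftrightarrow> sorted_wrt (\<ge>) xs \<and> (\<forall>x\<in>set xs. x > 0)"

definition embeds :: "nat list \<Rightarrow> nat list \<Rightarrow> bool" where
  "embeds lam mu \<longleftrightarrow>
     (\<exists>\<phi>::nat \<Rightarrow> nat. (\<forall>i<length lam. \<phi> i < length mu) \<and>
        (\<forall>j<length mu. (\<Sum>i\<in>{i. i < length lam \<and> \<phi> i = j}. lam ! i) \<le> mu ! j))"

definition supermajorized :: "nat list \<Rightarrow> nat list \<Rightarrow> bool" where
  "supermajorized lam mu \<longleftrightarrow>
     (\<forall>x::nat. sum_list (filter (\<lambda>a. a \<ge> x) lam) \<le> sum_list (filter (\<lambda>b. b \<ge> x) mu))"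

end

theory Submission
  imports Defs "HOL-Combinatorics.Permutations"
begin

lemma sl_filter: "sum_list (filter P xs) = (\<Sum>i<length xs. if P (xs!i) then xs!i else 0)"
  by (induction xs) (simp_all add: sum.lessThan_Suc_shift del: sum.lessThan_Suc cong: if_cong)

lemma emb_sup:
  assumes "embeds lam mu" shows "supermajorized lam mu"
  unfolding supermajorized_def
proof
  fix x :: nat
  obtain phi where ph: "\<forall>i<length lam. phi i < length mu"
    "\<forall>j<length mu. (\<Sum>i\<in>{i. i < length lam \<and> phi i = j}. lam ! i) \<le> mu ! j"
    using assms unfolding embeds_def by blast
  define g where "g i = (if x \<le> lam!i then lam!i else 0)" for i
  have "sum_list (filter (\<lambda>a. a \<ge> x) lam) = (\<Sum>i<length lam. g i)"
    by (simp add: sl_filter g_def)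
  also have "\<dots> = (\<Sum>j<length mu. \<Sum>i\<in>{i. i < length lam \<and> phi i = j}. g i)"
  proof -
    have "phi ` {..<length lam} \<subseteq> {..<length mu}" using ph(1) by auto
    from sum.group[OF _ _ this, of g] show ?thesis by simp
  qed
  also have "\<dots> \<le> (\<Sum>j<length mu. if x \<le> mu!j then mu!j else 0)"
  proof (rule sum_mono)
    fix j assume j: "j \<in> {..<length mu}"
    let ?F = "{i. i < length lam \<and> phi i = j}"
    have fin: "finite ?F" by auto
    have le: "(\<Sum>i\<in>?F. lam ! i) \<le> mu ! j" using ph(2) j by auto
    show "(\<Sum>i\<in>?F. g i) \<le> (if x \<le> mu!j then mu!j else 0)"
    proof (cases "x \<le> mu!j")
      case True
      have "(\<Sum>i\<in>?F. g i) \<le> (\<Sum>i\<in>?F. lam ! i)" by (rule sum_mono) (simp add: g_def)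
      then show ?thesis using True le by simp
    next
      case False
      have "g i = 0" if "i \<in> ?F" for i
      proof -
        have "lam ! i \<le> (\<Sum>i\<in>?F. lam ! i)" using member_le_sum[OF that _ fin, of "\<lambda>i. lam!i"] by simp
        then show ?thesis using le False by (simp add: g_def)
      qed
      then show ?thesis by simp
    qed
  qed
  also have "\<dots> = sum_list (filter (\<lambda>b. b \<ge> x) mu)"
    by (simp add: sl_filter)
  finally show "sum_list (filter (\<lambda>a. a \<ge> x) lam) \<le> sum_list (filter (\<lambda>b. b \<ge> x) mu)" .
qed

lemma emb_trans:
  assumes "embeds a b" "embeds b c" shows "embeds a c"
proof -
  obtain phi where ph: "\<forall>i<length a. phi i < length b"
    "\<forall>j<length b. (\<Sum>i\<in>{i. i < length a \<and> phi i = j}. a ! i) \<le> b ! j"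
    using assms(1) unfolding embeds_def by blast
  obtain g where gg: "\<forall>i<length b. g i < length c"
    "\<forall>j<length c. (\<Sum>i\<in>{i. i < length b \<and> g i = j}. b ! i) \<le> c ! j"
    using assms(2) unfolding embeds_def by blast
  have "(\<Sum>i\<in>{i. i < length a \<and> g (phi i) = j}. a ! i) \<le> c ! j" if j: "j < length c" for j
  proof -
    let ?S = "{i. i < length a \<and> g (phi i) = j}"
    let ?T = "{k. k < length b \<and> g k = j}"
    have "(\<Sum>i\<in>?S. a ! i) = (\<Sum>k\<in>?T. \<Sum>i\<in>{i\<in>?S. phi i = k}. a ! i)"
      by (rule sum.group[symmetric]) (use ph(1) in auto)
    also have "\<dots> = (\<Sum>k\<in>?T. \<Sum>i\<in>{i. i < length a \<and> phi i = k}. a ! i)"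
      by (rule sum.cong) (auto intro!: sum.cong)
    also have "\<dots> \<le> (\<Sum>k\<in>?T. b ! k)" by (rule sum_mono) (use ph(2) in auto)
    also have "\<dots> \<le> c ! j" using gg(2) j by auto
    finally show ?thesis .
  qed
  then show ?thesis unfolding embeds_def using ph(1) gg(1)
    by (intro exI[of _ "g \<circ> phi"]) auto
qed

lemma emb_cons:
  assumes "embeds lam mu" shows "embeds (a#lam) (a#mu)"
proof -
  obtain phi where ph: "\<forall>i<length lam. phi i < length mu"
    "\<forall>j<length mu. (\<Sum>i\<in>{i. i < length lam \<and> phi i = j}. lam ! i) \<le> mu ! j"
    using assms unfolding embeds_def by blast
  define psi where "psi i = (case i of 0 \<Rightarrow> 0 | Suc i' \<Rightarrow> Suc (phi i'))" for i
  have A: "\<forall>i<length (a#lam). psi i < length (a#mu)"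
    using ph(1) by (auto simp: psi_def split: nat.splits)
  have B: "(\<Sum>i\<in>{i. i < length (a#lam) \<and> psi i = j}. (a#lam) ! i) \<le> (a#mu) ! j"
    if j: "j < length (a#mu)" for j
  proof (cases j)
    case 0
    have "{i. i < length (a#lam) \<and> psi i = j} = {0}"
      using 0 apply (auto simp: psi_def split: nat.splits)
      using not0_implies_Suc by blast
    then show ?thesis using 0 by simp
  next
    case (Suc k)
    have "{i. i < length (a#lam) \<and> psi i = j} = Suc ` {i. i < length lam \<and> phi i = k}"
      using Suc apply (auto simp: psi_def image_iff split: nat.splits)
      using gr0_conv_Suc by blast
    then have "(\<Sum>i\<in>{i. i < length (a#lam) \<and> psi i = j}. (a#lam) ! i)
        = (\<Sum>i\<in>{i. i < length lam \<and> phi i = k}. lam ! i)"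
      by (simp add: sum.reindex)
    then show ?thesis using ph(2) Suc j by simp
  qed
  show ?thesis unfolding embeds_def using A B by blast
qed

lemma emb_split:
  assumes "p \<ge> 1" shows "embeds (replicate p c @ mu) ((p*c) # mu)"
proof -
  define g where "g j = (if j < p then 0 else Suc (j - p))" for j
  have A: "\<forall>i<length (replicate p c @ mu). g i < length ((p*c) # mu)"
    by (auto simp: g_def)
  have B: "(\<Sum>i\<in>{i. i < length (replicate p c @ mu) \<and> g i = j}. (replicate p c @ mu) ! i) \<le> ((p*c) # mu) ! j"
    if j: "j < length ((p*c)#mu)" for j
  proof (cases j)
    case 0
    have "{i. i < length (replicate p c @ mu) \<and> g i = j} = {..<p}"
      using 0 by (auto simp: g_def)
    then show ?thesis using 0 by (simp add: nth_append)
  next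
    case (Suc k)
    have "{i. i < length (replicate p c @ mu) \<and> g i = j} = {k + p}"
      using Suc j by (auto simp: g_def)
    then show ?thesis using Suc by (simp add: nth_append)
  qed
  show ?thesis unfolding embeds_def using A B by blast
qed

lemma emb_perm:
  assumes "mset mu = mset mu'" shows "embeds mu' mu"
proof -
  obtain q where q: "q permutes {..<length mu}" "permute_list q mu = mu'"
    using mset_eq_permutation[of mu' mu] assms by metis
  have len: "length mu' = length mu" using q(2) by auto
  have nth: "mu' ! i = mu ! (q i)" if "i < length mu" for i
    using q that permute_list_nth by metis
  have A: "\<forall>i<length mu'. q i < length mu"
    using permutes_in_image[OF q(1)] len by auto
  have B: "(\<Sum>i\<in>{i. i < length mu' \<and> q i = j}. mu' ! i) \<le> mu ! j" if j: "j < length mu" for j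
  proof -
    obtain i where i: "i < length mu" "q i = j"
      using j q(1) by (metis lessThan_iff permutes_inverses(1) permutes_in_image permutes_inv)
    have "{i. i < length mu' \<and> q i = j} = {i}"
      using i len q(1) by (auto dest: permutes_inj simp: inj_eq)
    then show ?thesis using i nth by simp
  qed
  show ?thesis unfolding embeds_def using A B by blast
qed


lemma main:
  assumes p: "p \<ge> (2::nat)"
  shows "sorted_wrt (\<ge>) lam \<Longrightarrow> \<forall>a\<in>set lam. \<exists>i. a = p^i \<Longrightarrow> \<forall>b\<in>set mu. \<exists>i. b = p^i
    \<Longrightarrow> supermajorized lam mu \<Longrightarrow> embeds lam mu"
proof (induction "sum_list (map (\<lambda>b. b*b) mu)" arbitrary: lam mu rule: less_induct)
  case less
  show ?case
  proof (cases lam)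
    case Nil
    then show ?thesis unfolding embeds_def by (intro exI[of _ "\<lambda>_. 0"]) simp
  next
    case (Cons a lam')
    obtain k where ak: "a = p^k" using less.prems(2) Cons by auto
    have apos: "a > 0" using ak p by simp
    have lam_le: "\<forall>x\<in>set lam'. x \<le> a" using less.prems(1) Cons by auto
    have "a \<le> sum_list (filter (\<lambda>x. x \<ge> a) lam)" using Cons by simp
    also have "\<dots> \<le> sum_list (filter (\<lambda>b. b \<ge> a) mu)" using less.prems(4) supermajorized_def by auto
    finally have "filter (\<lambda>b. b\<ge>a) mu \<noteq> []" using apos by auto
    then obtain b0 where b0: "b0 \<in> set mu" "b0 \<ge> a" by (auto simp: filter_empty_conv)
    define b where "b = Max (set mu)"
    have bin: "b \<in> set mu" unfolding b_def using b0 by (intro Max_in) auto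
    have bmax: "\<forall>y\<in>set mu. y \<le> b" unfolding b_def by auto
    have ab: "a \<le> b" using b0 bmax by force
    define mu' where "mu' = remove1 b mu"
    have ms: "mset mu = mset (b # mu')" using bin by (simp add: mu'_def insert_DiffM)
    have sl: "sum_list (filter P mu) = sum_list (filter P (b#mu'))" for P
    proof -
      have "sum_list (filter P mu) = sum_mset (mset (filter P mu))" by (simp only: sum_mset_sum_list)
      also have "\<dots> = sum_mset (mset (filter P (b#mu')))" by (simp only: mset_filter ms)
      also have "\<dots> = sum_list (filter P (b#mu'))" by (simp only: sum_mset_sum_list)
      finally show ?thesis .
    qed
    have sq0: "sum_list (map (\<lambda>b. b*b) mu) = sum_list (map (\<lambda>b. b*b) (b#mu'))"
    proof -
      have "sum_list (map (\<lambda>b. b*b) mu) = sum_mset (mset (map (\<lambda>b. b*b) mu))" by (simp only: sum_mset_sum_list)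
      also have "\<dots> = sum_mset (mset (map (\<lambda>b. b*b) (b#mu')))" by (simp only: mset_map ms)
      also have "\<dots> = sum_list (map (\<lambda>b. b*b) (b#mu'))" by (simp only: sum_mset_sum_list)
      finally show ?thesis .
    qed
    have mu'pow: "\<forall>y\<in>set mu'. \<exists>i. y = p^i"
      using less.prems(3) set_remove1_subset[of b mu] unfolding mu'_def by blast
    obtain j where bj: "b = p^j" using less.prems(3) bin by auto
    have kj: "k \<le> j" using power_le_imp_le_exp[of p k j] ab ak bj p by simp
    have "embeds lam (b # mu')"
    proof (cases "k = j")
      case True
      hence ba: "b = a" using ak bj by simp
      have bpos: "b*b > 0" using apos ba by simp
      have "embeds lam' mu'"
      proof (rule less.hyps)
        show "sum_list (map (\<lambda>b. b*b) mu') < sum_list (map (\<lambda>b. b*b) mu)" using sq0 bpos by simp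
        show "sorted_wrt (\<ge>) lam'" using less.prems(1) Cons by simp
        show "\<forall>a\<in>set lam'. \<exists>i. a = p^i" using less.prems(2) Cons by simp
        show "\<forall>a\<in>set mu'. \<exists>i. a = p^i" by (rule mu'pow)
        show "supermajorized lam' mu'" unfolding supermajorized_def
        proof
          fix x :: nat
          show "sum_list (filter (\<lambda>a. a \<ge> x) lam') \<le> sum_list (filter (\<lambda>b. b \<ge> x) mu')"
          proof (cases "x \<le> a")
            case True
            have "a + sum_list (filter (\<lambda>a. a \<ge> x) lam') = sum_list (filter (\<lambda>a. a \<ge> x) lam)"
              using Cons True by simp
            also have "\<dots> \<le> sum_list (filter (\<lambda>b. b \<ge> x) mu)" using less.prems(4) supermajorized_def by auto
            also have "\<dots> = a + sum_list (filter (\<lambda>b. b \<ge> x) mu')" using sl ba True by simp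
            finally show ?thesis by simp
          next
            case False
            then have "filter (\<lambda>a. a \<ge> x) lam' = []" using lam_le by (auto simp: filter_empty_conv)
            then show ?thesis by simp
          qed
        qed
      qed
      then show ?thesis using emb_cons Cons ba by simp
    next
      case False
      then obtain j' where jj: "j = Suc j'" "k \<le> j'" using kj by (cases j) auto
      define c where "c = p^j'"
      have bc: "b = p * c" using bj jj c_def by simp
      have cpos: "c > 0" using p c_def by simp
      have ac: "a \<le> c" using ak c_def jj p by (simp add: power_increasing)
      define mu'' where "mu'' = replicate p c @ mu'"
      have "embeds lam mu''"
      proof (rule less.hyps)
        have "sum_list (map (\<lambda>b. b*b) mu'') = p*(c*c) + sum_list (map (\<lambda>b. b*b) mu')"
          by (simp add: mu''_def sum_list_replicate)
        also have "p*(c*c) < b*b" using bc cpos p by simp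
        finally show "sum_list (map (\<lambda>b. b*b) mu'') < sum_list (map (\<lambda>b. b*b) mu)" using sq0 by simp
        show "sorted_wrt (\<ge>) lam" using less.prems(1) by simp
        show "\<forall>a\<in>set lam. \<exists>i. a = p^i" using less.prems(2) by simp
        show "\<forall>a\<in>set mu''. \<exists>i. a = p^i" using mu'pow c_def by (auto simp: mu''_def)
        show "supermajorized lam mu''" unfolding supermajorized_def
        proof
          fix x :: nat
          show "sum_list (filter (\<lambda>a. a \<ge> x) lam) \<le> sum_list (filter (\<lambda>b. b \<ge> x) mu'')"
          proof (cases "x \<le> c")
            case True
            have "sum_list (filter (\<lambda>a. a \<ge> x) lam) \<le> sum_list (filter (\<lambda>b. b \<ge> x) mu)"
              using less.prems(4) supermajorized_def by auto
            also have "\<dots> = b + sum_list (filter (\<lambda>b. b \<ge> x) mu')" using sl True bc p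
              by (simp add: order_trans[OF True])
            also have "\<dots> = sum_list (filter (\<lambda>b. b \<ge> x) mu'')"
              using True bc by (simp add: mu''_def sum_list_replicate)
            finally show ?thesis .
          next
            case False
            then have "filter (\<lambda>a. a \<ge> x) lam = []" using lam_le Cons ac by (auto simp: filter_empty_conv)
            then show ?thesis by simp
          qed
        qed
      qed
      moreover have "embeds mu'' (b # mu')" unfolding mu''_def bc
        by (rule emb_split) (use p in simp)
      ultimately show ?thesis by (rule emb_trans)
    qed
    moreover have "embeds (b # mu') mu" by (rule emb_perm[OF ms])
    ultimately show ?thesis by (rule emb_trans)
  qed
qed

theorem theorem3p2:
  fixes p :: nat and lam mu :: "nat list"
  assumes "p \<ge> 2"
    and "integral_partition lam" and "integral_partition mu"
    and "\<forall>a\<in>set lam. \<exists>i::nat. a = p ^ i"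
    and "\<forall>b\<in>set mu. \<exists>i::nat. b = p ^ i"
  shows "embeds lam mu \<longleftrightarrow> supermajorized lam mu"
proof
  assume "embeds lam mu" then show "supermajorized lam mu" by (rule emb_sup)
next
  assume "supermajorized lam mu"
  then show "embeds lam mu"
    using main[OF assms(1)] assms unfolding integral_partition_def by blast
qed

end
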